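(* Let $n\ge 0$ be an integer and for $k\in\mathbb{Z}_+$ let $$v_k(t)=c_k\,e^{-\frac{t^{2n+2}}{2n+2}}L^{(-\frac{1}{2n+2})}_{k}\!\left(\frac{t^{2n+2}}{n+1}\right),\qquad w_k(t)=d_k\,e^{-\frac{t^{2n+2}}{2n+2}}\,t\,L^{(\frac{1}{2n+2})}_{k}\!\left(\frac{t^{2n+2}}{n+1}\right),$$ with $c_k,d_k>0$ chosen so that $\|t^nv_k\|_{L^2(\mathbb{R})}=\|t^nw_k\|_{L^2(\mathbb{R})}=1$, and let $E_k=4k(n+1)+2n+1$. There exists a constant $C_0>0$ such that for all $k\in\mathbb{Z}_+$ $$\|v_k\|_{L^\infty(\mathbb{R})}\le C_0E_k^{\frac32+\frac{1}{4n+4}},\qquad \|w_k\|_{L^\infty(\mathbb{R})}\le C_0E_k^{\frac32+\frac{1}{4n+4}}.$$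
   Context: $L^{(a)}_k$ denotes the generalized Laguerre polynomial of degree $k$ and parameter $a$. These functions solve $-u''+t^{2(2n+1)}u=E\,t^{2n}u$, with $E=E_k$ for $v_k$ and $E=4k(n+1)+2n+3$ for $w_k$. *)

theory Defs
  imports "HOL-Analysis.Analysis"
begin

definition laguerre :: "real \<Rightarrow> nat \<Rightarrow> real \<Rightarrow> real" where
  "laguerre a k x = (\<Sum>i\<le>k. (-1)^i * ((real k + a) gchoose (k - i)) * x^i / fact i)"

text \<open>Unnormalized profiles: v_k = c_k * vprof, w_k = d_k * wprof.\<close>
definition vprof :: "nat \<Rightarrow> nat \<Rightarrow> real \<Rightarrow> real" where
  "vprof n k t = exp (- (t^(2*n+2)) / (2*n+2))
     * laguerre (- 1 / (2*n+2)) k (t^(2*n+2) / (n+1))"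

definition wprof :: "nat \<Rightarrow> nat \<Rightarrow> real \<Rightarrow> real" where
  "wprof n k t = exp (- (t^(2*n+2)) / (2*n+2)) * t
     * laguerre (1 / (2*n+2)) k (t^(2*n+2) / (n+1))"

definition Ek :: "nat \<Rightarrow> nat \<Rightarrow> real" where
  "Ek n k = 4 * real k * (real n + 1) + 2 * real n + 1"

end

theory Submission
  imports Defs
begin


lemma ftc_real:
  fixes f f' :: "real \<Rightarrow> real"
  assumes "a \<le> b" "\<And>x. (f has_real_derivative f' x) (at x)"
  shows "(f' has_integral (f b - f a)) {a..b}"
  apply (rule fundamental_theorem_of_calculus[OF assms(1)])
  using assms(2) by (simp add: has_real_derivative_iff_has_vector_derivative[symmetric] has_field_derivative_at_within)

locale odeu =
  fixes u u' :: "real \<Rightarrow> real" and E :: real and n :: nat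
  assumes D1: "\<And>t. (u has_real_derivative u' t) (at t)"
    and D2: "\<And>t. (u' has_real_derivative ((t^(4*n+2) - E*t^(2*n)) * u t)) (at t)"
    and Epos: "E \<ge> 0"
    and N: "((\<lambda>t. (t^n * u t)^2) has_integral 1) UNIV"
begin

lemma cont_u: "continuous_on S u"
  using D1 by (meson DERIV_isCont continuous_at_imp_continuous_on)
lemma cont_u': "continuous_on S u'"
  using D2 by (meson DERIV_isCont continuous_at_imp_continuous_on)

lemma intg: "integral {a..b} (\<lambda>t. (t^n * u t)^2) \<le> 1"
proof -
  have "integral {a..b} (\<lambda>t. (t^n * u t)^2) \<le> integral UNIV (\<lambda>t. (t^n * u t)^2)"
    apply (rule integral_subset_le)
    using N by (auto intro!: integrable_continuous_interval continuous_intros cont_u)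
  then show ?thesis using N by (simp add: integral_unique)
qed

lemma integrable_w: "(\<lambda>t. (t^n * u t)^2) integrable_on {a..b}"
  by (auto intro!: integrable_continuous_interval continuous_intros cont_u)

lemma small_point:
  assumes "1 \<le> p \<or> p + 1 \<le> -1"
  shows "\<exists>s\<in>{p..p+1}. \<bar>u s\<bar> \<le> 2"
proof (rule ccontr)
  assume "\<not> ?thesis"
  then have big: "\<And>s. s \<in> {p..p+1} \<Longrightarrow> 4 \<le> (s^n * u s)^2"
  proof -
    fix s assume s: "s \<in> {p..p+1}" and h: "\<not> (\<exists>s\<in>{p..p+1}. \<bar>u s\<bar> \<le> 2)"
    have "\<bar>u s\<bar> > 2" using s h by (meson not_le)
    hence "2*2 \<le> \<bar>u s\<bar>*\<bar>u s\<bar>" by (intro mult_mono) auto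
    hence "4 \<le> (u s)^2" by (simp add: power2_eq_square)
    moreover have "1 \<le> \<bar>s\<bar>" using s assms by auto
    hence "1 \<le> \<bar>s\<bar>^n" by (simp add: one_le_power)
    hence "1 \<le> (s^n)^2" by (metis one_le_power power2_abs power_abs)
    ultimately show "4 \<le> (s^n * u s)^2"
    proof -
      have "1*4 \<le> (s^n)^2 * (u s)^2" by (rule mult_mono) (use \<open>1 \<le> (s^n)^2\<close> \<open>4 \<le> (u s)^2\<close> in auto)
      thus ?thesis by (simp add: power_mult_distrib)
    qed
  qed
  have "integral {p..p+1} (\<lambda>s. 4::real) \<le> integral {p..p+1} (\<lambda>t. (t^n * u t)^2)"
    by (rule integral_le[OF integrable_const_ivl integrable_w big])
  then show False using intg[of p "p+1"] by simp
qed

lemma w_ge: "1 \<le> \<bar>x\<bar> \<Longrightarrow> (u x)^2 \<le> (x^n * u x)^2"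
proof -
  assume "1 \<le> \<bar>x\<bar>"
  hence "1 \<le> \<bar>x\<bar>^n" by (simp add: one_le_power)
  hence "1 \<le> (x^n)^2" by (metis one_le_power power2_abs power_abs)
  hence "1 * (u x)^2 \<le> (x^n)^2 * (u x)^2" by (intro mult_right_mono) auto
  thus ?thesis by (simp add: power_mult_distrib)
qed

lemma deriv_sq: "((\<lambda>x. (u x)^2) has_real_derivative (2 * u x * u' x)) (at x)"
  using D1[of x] by (auto intro!: derivative_eq_intros)

lemma exists_b: "\<exists>b\<ge>R. u b * u' b \<le> 0"
proof (rule ccontr)
  assume "\<not> ?thesis"
  hence H: "\<And>b. b \<ge> R \<Longrightarrow> u b * u' b > 0" by (meson not_le)
  define R1 where "R1 = max R 1"
  define \<delta> where "\<delta> = (u R1)^2"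
  have "u R1 * u' R1 > 0" using H R1_def by simp
  hence "u R1 \<noteq> 0" by auto
  hence dpos: "\<delta> > 0" unfolding \<delta>_def by simp
  have big: "\<delta> \<le> (x^n * u x)^2" if x: "x \<in> {R1..R1 + 2/\<delta>}" for x
  proof -
    have "\<delta> \<le> (u x)^2" unfolding \<delta>_def
    proof (rule DERIV_nonneg_imp_nondecreasing[where f="\<lambda>x. (u x)^2"])
      show "R1 \<le> x" using x by simp
      fix y assume "R1 \<le> y" "y \<le> x"
      hence "u y * u' y > 0" using H R1_def by simp
      thus "\<exists>z. ((\<lambda>x. (u x)^2) has_real_derivative z) (at y) \<and> 0 \<le> z"
        using deriv_sq[of y] by (intro exI[of _ "2 * u y * u' y"]) auto
    qed
    also have "\<dots> \<le> (x^n * u x)^2" using x R1_def by (intro w_ge) auto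
    finally show ?thesis .
  qed
  have "integral {R1..R1 + 2/\<delta>} (\<lambda>s. \<delta>) \<le> integral {R1..R1 + 2/\<delta>} (\<lambda>t. (t^n * u t)^2)"
    by (rule integral_le[OF integrable_const_ivl integrable_w big])
  then show False using intg[of R1 "R1 + 2/\<delta>"] dpos by simp
qed

lemma exists_a: "\<exists>a\<le>R. u a * u' a \<ge> 0"
proof (rule ccontr)
  assume "\<not> ?thesis"
  hence H: "\<And>b. b \<le> R \<Longrightarrow> u b * u' b < 0" by (meson not_le)
  define R1 where "R1 = min R (-1)"
  define \<delta> where "\<delta> = (u R1)^2"
  have "u R1 * u' R1 < 0" using H R1_def by simp
  hence "u R1 \<noteq> 0" by auto
  hence dpos: "\<delta> > 0" unfolding \<delta>_def by simp
  have big: "\<delta> \<le> (x^n * u x)^2" if x: "x \<in> {R1 - 2/\<delta>..R1}" for x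
  proof -
    have "\<delta> \<le> (u x)^2" unfolding \<delta>_def
    proof (rule DERIV_nonpos_imp_nonincreasing[where f="\<lambda>x. (u x)^2"])
      show "x \<le> R1" using x by simp
      fix y assume "x \<le> y" "y \<le> R1"
      hence "u y * u' y < 0" using H R1_def by simp
      thus "\<exists>z. ((\<lambda>x. (u x)^2) has_real_derivative z) (at y) \<and> z \<le> 0"
        using deriv_sq[of y] by (intro exI[of _ "2 * u y * u' y"]) auto
    qed
    also have "\<dots> \<le> (x^n * u x)^2" using x R1_def by (intro w_ge) auto
    finally show ?thesis .
  qed
  have "integral {R1 - 2/\<delta>..R1} (\<lambda>s. \<delta>) \<le> integral {R1 - 2/\<delta>..R1} (\<lambda>t. (t^n * u t)^2)"
    by (rule integral_le[OF integrable_const_ivl integrable_w big])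
  then show False using intg[of "R1 - 2/\<delta>" R1] dpos by simp
qed

lemma energy:
  assumes ab: "a \<le> b" and ca: "u a * u' a \<ge> 0" and cb: "u b * u' b \<le> 0"
  shows "integral {a..b} (\<lambda>t. (u' t)^2) \<le> E"
proof -
  define f' where "f' t = u' t * u' t + u t * ((t^(4*n+2) - E*t^(2*n)) * u t)" for t
  have h: "(f' has_integral (u b * u' b - u a * u' a)) {a..b}"
    using ab unfolding f'_def
    by (rule ftc_real[where f="\<lambda>t. u t * u' t"]) (auto intro!: derivative_eq_intros D1 D2 simp: algebra_simps)
  have hw: "((\<lambda>t. (t^n * u t)^2) has_integral integral {a..b} (\<lambda>t. (t^n * u t)^2)) {a..b}"
    using integrable_w by (rule integrable_integral)
  have h2: "((\<lambda>t. f' t + E * (t^n * u t)^2) has_integral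
       ((u b * u' b - u a * u' a) + E * integral {a..b} (\<lambda>t. (t^n * u t)^2))) {a..b}"
    by (intro has_integral_add h has_integral_mult_right hw)
  have hu: "((\<lambda>t. (u' t)^2) has_integral integral {a..b} (\<lambda>t. (u' t)^2)) {a..b}"
    by (intro integrable_integral integrable_continuous_interval continuous_intros cont_u')
  have pt: "(u' t)^2 \<le> f' t + E * (t^n * u t)^2" for t
  proof -
    have "t^(4*n+2) = t^((2*n+1)*2)" by (simp add: algebra_simps)
    hence e1: "t^(4*n+2) = (t^(2*n+1))^2" by (simp only: power_mult)
    have e2: "t^(2*n) = (t^n)^2" by (simp add: power_mult[symmetric] mult.commute)
    have "f' t + E * (t^n * u t)^2 = (u' t)^2 + (t^(2*n+1) * u t)^2"
      unfolding f'_def e1 e2 by (simp add: power2_eq_square algebra_simps)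
    thus ?thesis by simp
  qed
  have "integral {a..b} (\<lambda>t. (u' t)^2) \<le> (u b * u' b - u a * u' a) + E * integral {a..b} (\<lambda>t. (t^n * u t)^2)"
    by (rule has_integral_le[OF hu h2]) (rule pt)
  also have "\<dots> \<le> 0 + E * 1"
    using ca cb intg[of a b] Epos by (intro add_mono mult_left_mono) auto
  finally show ?thesis by simp
qed

lemma diff_bound:
  assumes "a \<le> p" "p \<le> q" "q \<le> b" and ca: "u a * u' a \<ge> 0" and cb: "u b * u' b \<le> 0"
  shows "2 * \<bar>u q - u p\<bar> \<le> (q - p) + E"
proof -
  have I: "integral {p..q} (\<lambda>t. (u' t)^2) \<le> E"
  proof -
    have "integral {p..q} (\<lambda>t. (u' t)^2) \<le> integral {a..b} (\<lambda>t. (u' t)^2)"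
      using assms by (intro integral_subset_le) (auto intro!: integrable_continuous_interval continuous_intros cont_u')
    also have "\<dots> \<le> E" using assms by (intro energy) auto
    finally show ?thesis .
  qed
  have h: "(u' has_integral (u q - u p)) {p..q}" using assms(2) by (rule ftc_real) (rule D1)
  have hu: "((\<lambda>t. (u' t)^2) has_integral integral {p..q} (\<lambda>t. (u' t)^2)) {p..q}"
    by (intro integrable_integral integrable_continuous_interval continuous_intros cont_u')
  have hg: "((\<lambda>t. (1/2) * 1 + (1/2) * (u' t)^2) has_integral ((1/2) * (q - p) + (1/2) * integral {p..q} (\<lambda>t. (u' t)^2))) {p..q}"
    using assms(2) by (intro has_integral_add has_integral_mult_right hu) (use has_integral_const_real[of "1::real" p q] in simp)
  have p1: "u' t \<le> (1/2) * 1 + (1/2) * (u' t)^2" for t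
    using sum_squares_ge_zero[of "u' t - 1" 0] by (simp add: power2_eq_square algebra_simps)
  have p2: "- u' t \<le> (1/2) * 1 + (1/2) * (u' t)^2" for t
    using sum_squares_ge_zero[of "u' t + 1" 0] by (simp add: power2_eq_square algebra_simps)
  have "u q - u p \<le> (1/2) * (q - p) + (1/2) * integral {p..q} (\<lambda>t. (u' t)^2)"
    by (rule has_integral_le[OF h hg]) (rule p1)
  moreover have "-(u q - u p) \<le> (1/2) * (q - p) + (1/2) * integral {p..q} (\<lambda>t. (u' t)^2)"
    by (rule has_integral_le[OF has_integral_neg[OF h] hg]) (rule p2)
  ultimately show ?thesis using I by (simp add: field_simps abs_if)
qed

lemma sup_bound: "\<bar>u t\<bar> \<le> 4 + E"
proof -
  obtain s where s: "\<bar>u s\<bar> \<le> 2" "\<bar>t - s\<bar> \<le> 3"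
  proof (cases "t \<ge> 1")
    case True
    then obtain s where "s \<in> {t..t+1}" "\<bar>u s\<bar> \<le> 2" using small_point[of t] by auto
    thus ?thesis using that by auto
  next
    case f1: False
    show ?thesis
    proof (cases "t \<le> -1")
      case True
      then obtain s where "s \<in> {t-1..t-1+1}" "\<bar>u s\<bar> \<le> 2" using small_point[of "t-1"] by auto
      thus ?thesis using that by auto
    next
      case False
      then obtain s where "s \<in> {1..1+1}" "\<bar>u s\<bar> \<le> 2" using small_point[of 1] by auto
      thus ?thesis using that f1 False by auto
    qed
  qed
  obtain b where b: "b \<ge> \<bar>t\<bar> + \<bar>s\<bar>" "u b * u' b \<le> 0" using exists_b by blast
  obtain a where a: "a \<le> -(\<bar>t\<bar> + \<bar>s\<bar>)" "u a * u' a \<ge> 0" using exists_a by blast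
  define p where "p = min t s"
  define q where "q = max t s"
  have h1: "2 * \<bar>u q - u p\<bar> \<le> (q - p) + E"
    using a b unfolding p_def q_def by (intro diff_bound) auto
  have h2: "\<bar>u t - u s\<bar> = \<bar>u q - u p\<bar>" unfolding p_def q_def by (cases "t \<le> s") (auto simp: max_def min_def)
  have h3: "q - p \<le> 3" using s unfolding p_def q_def by (auto simp: max_def min_def)
  have h4: "\<bar>u t\<bar> \<le> \<bar>u s\<bar> + \<bar>u t - u s\<bar>" by (metis abs_triangle_ineq add.commute diff_add_cancel)
  have "2 * \<bar>u t - u s\<bar> \<le> q - p + E" using h1 h2 by simp
  also have "\<dots> \<le> 3 + E" using h3 by simp
  finally have h5: "2 * \<bar>u t - u s\<bar> \<le> 3 + E" .
  have gen: "\<And>x y z::real. x \<le> y + z \<Longrightarrow> y \<le> 2 \<Longrightarrow> 2*z \<le> 3+E \<Longrightarrow> x \<le> 4+E" using Epos by linarith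
  show ?thesis by (rule gen[OF h4 s(1) h5])
qed

end


definition lc :: "real \<Rightarrow> nat \<Rightarrow> nat \<Rightarrow> real" where
  "lc a k i = (-1)^i * ((real k + a) gchoose (k - i)) / fact i"
definition LL :: "real \<Rightarrow> nat \<Rightarrow> real \<Rightarrow> real" where
  "LL a k x = (\<Sum>i\<le>k. lc a k i * x^i)"
definition L1 :: "real \<Rightarrow> nat \<Rightarrow> real \<Rightarrow> real" where
  "L1 a k x = (\<Sum>i\<le>k. lc a k i * (of_nat i * x^(i-1)))"
definition L2 :: "real \<Rightarrow> nat \<Rightarrow> real \<Rightarrow> real" where
  "L2 a k x = (\<Sum>i\<le>k. lc a k i * (of_nat i * (of_nat (i-1) * x^(i-1-1))))"

lemma laguerre_LL: "laguerre a k x = LL a k x"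
  unfolding laguerre_def LL_def lc_def by (rule sum.cong) auto

lemma DLL: "(LL a k has_real_derivative L1 a k x) (at x)"
  unfolding LL_def L1_def by (auto intro!: derivative_eq_intros sum.cong simp: mult_ac)

lemma DL1: "(L1 a k has_real_derivative L2 a k x) (at x)"
  unfolding L1_def L2_def by (auto intro!: derivative_eq_intros sum.cong simp: mult_ac)

lemma coef:
  assumes "i < k"
  shows "real (Suc i) * (real (Suc i) + a) * lc a k (Suc i) = - (real k - real i) * lc a k i"
proof -
  define j where "j = k - Suc i"
  have kj: "k - i = Suc j" "k - Suc i = j" using assms j_def by auto
  define N where "N = real k + a"
  have rj: "real j = real k - real i - 1" using assms j_def by simp
  have A: "(N - real j) * (N gchoose j) = N * ((N - 1) gchoose j)" by (rule gbinomial_absorb_comp)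
  have B: "real (Suc j) * (N gchoose Suc j) = N * ((N - 1) gchoose j)" by (rule gbinomial_absorption)
  have C: "(real (Suc i) + a) * (N gchoose j) = real (Suc j) * (N gchoose Suc j)"
    using A B unfolding N_def rj by (simp add: algebra_simps)
  have F: "real (Suc i) * lc a k (Suc i) = - ((-1)^i * (N gchoose j) / fact i)"
    unfolding lc_def kj N_def fact_Suc by simp
  have "real (Suc i) * (real (Suc i) + a) * lc a k (Suc i)
      = (real (Suc i) + a) * (real (Suc i) * lc a k (Suc i))" by (simp add: algebra_simps)
  also have "\<dots> = - ((-1)^i * ((real (Suc i) + a) * (N gchoose j)) / fact i)"
    unfolding F by simp
  also have "\<dots> = - ((-1)^i * (real (Suc j) * (N gchoose Suc j)) / fact i)" by (simp only: C)
  also have "\<dots> = - (real k - real i) * lc a k i"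
    unfolding lc_def kj N_def using assms by (simp add: field_simps rj)
  finally show ?thesis .
qed

lemma laguerre_ode: "x * L2 a k x + (a + 1 - x) * L1 a k x + real k * LL a k x = 0"
proof -
  have s1: "x * L2 a k x + (a + 1) * L1 a k x = (\<Sum>i\<le>k. lc a k i * (of_nat i * (of_nat i + a) * x^(i-1)))"
    unfolding L1_def L2_def sum_distrib_left sum.distrib[symmetric]
  proof (rule sum.cong[OF refl])
    fix i assume "i \<in> {..k}"
    show "x * (lc a k i * (of_nat i * (of_nat (i - 1) * x ^ (i - 1 - 1)))) + (a + 1) * (lc a k i * (of_nat i * x ^ (i - 1)))
       = lc a k i * (of_nat i * (of_nat i + a) * x ^ (i - 1))"
    proof (cases i)
      case 0 then show ?thesis by simp
    next
      case (Suc j) then show ?thesis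
        by (cases j) (auto simp: algebra_simps)
    qed
  qed
  have s2: "- x * L1 a k x + real k * LL a k x = (\<Sum>i\<le>k. lc a k i * ((real k - real i) * x^i))"
    unfolding L1_def LL_def sum_distrib_left sum.distrib[symmetric]
  proof (rule sum.cong[OF refl])
    fix i assume "i \<in> {..k}"
    show "- x * (lc a k i * (of_nat i * x ^ (i - 1))) + real k * (lc a k i * x ^ i) = lc a k i * ((real k - real i) * x ^ i)"
      by (cases i) (auto simp: algebra_simps)
  qed
  have "x * L2 a k x + (a + 1 - x) * L1 a k x + real k * LL a k x
      = (\<Sum>i\<le>k. lc a k i * (of_nat i * (of_nat i + a) * x^(i-1))) + (\<Sum>i\<le>k. lc a k i * ((real k - real i) * x^i))"
    using s1 s2 by (simp add: algebra_simps)
  also have "\<dots> = 0"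
  proof (cases k)
    case 0 then show ?thesis by simp
  next
    case (Suc m)
    have e1: "(\<Sum>i\<le>k. lc a k i * (of_nat i * (of_nat i + a) * x^(i-1)))
        = (\<Sum>i\<le>m. lc a k (Suc i) * (of_nat (Suc i) * (of_nat (Suc i) + a) * x^i))"
      unfolding Suc sum.atMost_Suc_shift by simp
    have e2: "(\<Sum>i\<le>k. lc a k i * ((real k - real i) * x^i)) = (\<Sum>i\<le>m. lc a k i * ((real k - real i) * x^i))"
      unfolding Suc sum.atMost_Suc by simp
    have "(\<Sum>i\<le>m. lc a k (Suc i) * (of_nat (Suc i) * (of_nat (Suc i) + a) * x^i)) + (\<Sum>i\<le>m. lc a k i * ((real k - real i) * x^i)) = 0"
      unfolding sum.distrib[symmetric]
    proof (rule sum.neutral, rule ballI)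
      fix i assume "i \<in> {..m}"
      hence "i < k" using Suc by auto
      have "lc a k (Suc i) * (of_nat (Suc i) * (of_nat (Suc i) + a) * x^i) + lc a k i * ((real k - real i) * x^i)
         = (real (Suc i) * (real (Suc i) + a) * lc a k (Suc i) + (real k - real i) * lc a k i) * x^i"
        by (simp add: algebra_simps)
      also have "\<dots> = (- (real k - real i) * lc a k i + (real k - real i) * lc a k i) * x^i"
        by (simp only: coef[OF \<open>i < k\<close>])
      also have "\<dots> = 0" by (simp add: algebra_simps)
      finally show "lc a k (Suc i) * (of_nat (Suc i) * (of_nat (Suc i) + a) * x^i) + lc a k i * ((real k - real i) * x^i) = 0" .
    qed
    then show ?thesis using e1 e2 by simp
  qed
  finally show ?thesis .
qed



definition phi :: "nat \<Rightarrow> real \<Rightarrow> real" where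
  "phi n t = exp (- (t^(2*n+2)) / (2 * real n + 2))"
definition XX :: "nat \<Rightarrow> real \<Rightarrow> real" where
  "XX n t = t^(2*n+2) / (real n + 1)"

lemma vprof_eq: "vprof n k t = phi n t * LL (- 1 / (2*n+2)) k (XX n t)"
  unfolding vprof_def phi_def XX_def laguerre_LL ..
lemma wprof_eq: "wprof n k t = phi n t * t * LL (1 / (2*n+2)) k (XX n t)"
  unfolding wprof_def phi_def XX_def laguerre_LL ..

lemma Dpow2: "((\<lambda>t::real. t^(2*n+2)) has_real_derivative ((2 * real n + 2) * t^(2*n+1))) (at t)"
  by (rule DERIV_cong, rule DERIV_pow) simp

lemma Dphi: "(phi n has_real_derivative (- (t^(2*n+1)) * phi n t)) (at t)"
proof -
  have "((\<lambda>t. - (t^(2*n+2)) / (2 * real n + 2)) has_real_derivative (- ((2 * real n + 2) * t^(2*n+1))) / (2 * real n + 2)) (at t)"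
    by (rule DERIV_cdivide[OF DERIV_minus[OF Dpow2]])
  from DERIV_fun_exp[OF this] show ?thesis unfolding phi_def
    by (rule DERIV_cong) (simp add: field_simps)
qed

lemma DX: "(XX n has_real_derivative (2 * t^(2*n+1))) (at t)"
proof -
  have "((\<lambda>t. t^(2*n+2) / (real n + 1)) has_real_derivative ((2 * real n + 2) * t^(2*n+1)) / (real n + 1)) (at t)"
    by (rule DERIV_cdivide[OF Dpow2])
  then show ?thesis unfolding XX_def
    by (rule DERIV_cong) (simp add: field_simps)
qed

lemma DLc: "((\<lambda>t. LL a k (XX n t)) has_real_derivative (L1 a k (XX n t) * (2 * t^(2*n+1)))) (at t)"
  by (rule DERIV_chain2[OF DLL DX])
lemma DL1c: "((\<lambda>t. L1 a k (XX n t)) has_real_derivative (L2 a k (XX n t) * (2 * t^(2*n+1)))) (at t)"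
  by (rule DERIV_chain2[OF DL1 DX])

lemma Dpow: "((\<lambda>t::real. t^(2*n+1)) has_real_derivative (real (2*n+1) * t^(2*n))) (at t)"
  by (rule DERIV_cong, rule DERIV_pow) simp



lemma alg_v:
  fixes t P ph L L1 L2 nn kk :: real
  assumes nn: "nn \<ge> 0"
    and ode: "(t^2*P/(nn+1)) * L2 + (- 1 / (2*nn+2) + 1 - t^2*P/(nn+1)) * L1 + kk * L = 0"
  shows "(t*P*ph) * (2*(L2*(2*(t*P))) - L1*(2*(t*P))) + ((t*P)*(-(t*P)*ph) + (2*nn+1)*P*ph)*(2*L1 - L)
       = ((t^2*P^2) - (4*kk*(nn+1)+2*nn+1)*P) * (ph*L)"
proof -
  define X where "X = t^2*P/(nn+1)"
  define c where "c = - 1 / (2*nn+2)"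
  have e1: "4*(nn+1)*X = 4*t^2*P" using nn unfolding X_def by (simp add: field_simps)
  have e2: "4*(nn+1)*c = -2" using nn unfolding c_def by (simp add: field_simps)
  have "4*(nn+1) * (X * L2 + (c + 1 - X) * L1 + kk * L)
      = (4*(nn+1)*X)*L2 + (4*(nn+1)*c + 4*(nn+1) - 4*(nn+1)*X)*L1 + 4*(nn+1)*kk*L"
    by (simp add: algebra_simps)
  also have "\<dots> = 4*t^2*P*L2 + (4*nn+2 - 4*t^2*P)*L1 + 4*(nn+1)*kk*L"
    unfolding e1 e2 by (simp add: algebra_simps)
  finally have "4*(nn+1) * (X * L2 + (c + 1 - X) * L1 + kk * L) = 4*t^2*P*L2 + (4*nn+2 - 4*t^2*P)*L1 + 4*(nn+1)*kk*L" .
  hence h: "4*t^2*P*L2 + (4*nn+2 - 4*t^2*P)*L1 + 4*(nn+1)*kk*L = 0" using ode unfolding X_def c_def by simp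
  have "(t*P*ph) * (2*(L2*(2*(t*P))) - L1*(2*(t*P))) + ((t*P)*(-(t*P)*ph) + (2*nn+1)*P*ph)*(2*L1 - L)
       - ((t^2*P^2) - (4*kk*(nn+1)+2*nn+1)*P) * (ph*L)
       = P*ph*(4*t^2*P*L2 + (4*nn+2 - 4*t^2*P)*L1 + 4*(nn+1)*kk*L)"
    by (simp add: algebra_simps power2_eq_square)
  then show ?thesis using h by simp
qed

lemma alg_w:
  fixes t P ph L L1 L2 nn kk :: real
  assumes nn: "nn \<ge> 0"
    and ode: "(t^2*P/(nn+1)) * L2 + (1 / (2*nn+2) + 1 - t^2*P/(nn+1)) * L1 + kk * L = 0"
  shows "ph * (L1 * (2*(t*P)) + ((t^2*P) * (2*(L2*(2*(t*P))) - L1*(2*(t*P))) + ((2*nn+2)*(t*P)) * (2*L1 - L)))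
         + (-(t*P)*ph) * (L + (t^2*P) * (2*L1 - L))
       = ((t^2*P^2) - (4*kk*(nn+1)+2*nn+1+2)*P) * (ph*t*L)"
proof -
  define X where "X = t^2*P/(nn+1)"
  define c where "c = 1 / (2*nn+2)"
  have e1: "4*(nn+1)*X = 4*t^2*P" using nn unfolding X_def by (simp add: field_simps)
  have e2: "4*(nn+1)*c = 2" using nn unfolding c_def by (simp add: field_simps)
  have "4*(nn+1) * (X * L2 + (c + 1 - X) * L1 + kk * L)
      = (4*(nn+1)*X)*L2 + (4*(nn+1)*c + 4*(nn+1) - 4*(nn+1)*X)*L1 + 4*(nn+1)*kk*L"
    by (simp add: algebra_simps)
  also have "\<dots> = 4*t^2*P*L2 + (4*nn+6 - 4*t^2*P)*L1 + 4*(nn+1)*kk*L"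
    unfolding e1 e2 by (simp add: algebra_simps)
  finally have "4*(nn+1) * (X * L2 + (c + 1 - X) * L1 + kk * L) = 4*t^2*P*L2 + (4*nn+6 - 4*t^2*P)*L1 + 4*(nn+1)*kk*L" .
  hence h: "4*t^2*P*L2 + (4*nn+6 - 4*t^2*P)*L1 + 4*(nn+1)*kk*L = 0" using ode unfolding X_def c_def by simp
  have "ph * (L1 * (2*(t*P)) + ((t^2*P) * (2*(L2*(2*(t*P))) - L1*(2*(t*P))) + ((2*nn+2)*(t*P)) * (2*L1 - L)))
         + (-(t*P)*ph) * (L + (t^2*P) * (2*L1 - L))
       - ((t^2*P^2) - (4*kk*(nn+1)+2*nn+1+2)*P) * (ph*t*L)
       = t*P*ph*(4*t^2*P*L2 + (4*nn+6 - 4*t^2*P)*L1 + 4*(nn+1)*kk*L)"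
    by (simp add: algebra_simps power2_eq_square)
  then show ?thesis using h by simp
qed



definition vd :: "nat \<Rightarrow> nat \<Rightarrow> real \<Rightarrow> real" where
  "vd n k t = t^(2*n+1) * phi n t * (2 * L1 (- 1 / (2 * real n + 2)) k (XX n t) - LL (- 1 / (2 * real n + 2)) k (XX n t))"
definition wd :: "nat \<Rightarrow> nat \<Rightarrow> real \<Rightarrow> real" where
  "wd n k t = phi n t * (LL (1 / (2 * real n + 2)) k (XX n t) + t^(2*n+2) * (2 * L1 (1 / (2 * real n + 2)) k (XX n t) - LL (1 / (2 * real n + 2)) k (XX n t)))"

lemma pows:
  fixes t :: real
  shows "t^(2*n+1) = t * t^(2*n)" "t^(2*n+2) = t^2 * t^(2*n)" "t^(4*n+2) = t^2 * (t^(2*n))^2"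
proof -
  show "t^(2*n+1) = t * t^(2*n)" by simp
  show "t^(2*n+2) = t^2 * t^(2*n)" by (simp add: power_add[symmetric])
  have "t^(4*n+2) = t^(2 + 2*n*2)" by (simp add: algebra_simps)
  thus "t^(4*n+2) = t^2 * (t^(2*n))^2" by (simp only: power_add power_mult)
qed

lemma Dv: "(vprof n k has_real_derivative vd n k t) (at t)"
proof -
  have e: "vprof n k = (\<lambda>t. phi n t * LL (- 1 / (2 * real n + 2)) k (XX n t))"
    by (rule ext) (simp add: vprof_eq)
  show ?thesis unfolding e vd_def
    by (rule DERIV_cong[OF DERIV_mult'[OF Dphi DLc]]) (simp add: algebra_simps)
qed

lemma Dvd: "(vd n k has_real_derivative ((t^(4*n+2) - Ek n k * t^(2*n)) * vprof n k t)) (at t)"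
proof -
  define a where "a = - 1 / (2 * real n + 2)"
  have e: "vd n k = (\<lambda>t. (t^(2*n+1) * phi n t) * (2 * L1 a k (XX n t) - LL a k (XX n t)))"
    by (rule ext) (simp add: vd_def a_def)
  have D: "((\<lambda>t. (t^(2*n+1) * phi n t) * (2 * L1 a k (XX n t) - LL a k (XX n t))) has_real_derivative
     (t^(2*n+1) * phi n t) * (2 * (L2 a k (XX n t) * (2 * t^(2*n+1))) - L1 a k (XX n t) * (2 * t^(2*n+1)))
     + (t^(2*n+1) * (- (t^(2*n+1)) * phi n t) + real (2*n+1) * t^(2*n) * phi n t) * (2 * L1 a k (XX n t) - LL a k (XX n t))) (at t)"
    by (rule DERIV_mult'[OF DERIV_mult'[OF Dpow Dphi] DERIV_diff[OF DERIV_cmult[OF DL1c] DLc]])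
  have ode: "XX n t * L2 a k (XX n t) + (a + 1 - XX n t) * L1 a k (XX n t) + real k * LL a k (XX n t) = 0"
    by (rule laguerre_ode)
  have X: "XX n t = t^2 * t^(2*n) / (real n + 1)" unfolding XX_def pows ..
  have ode': "(t^2*t^(2*n)/(real n+1)) * L2 a k (XX n t) + (- 1 / (2*real n+2) + 1 - t^2*t^(2*n)/(real n+1)) * L1 a k (XX n t) + real k * LL a k (XX n t) = 0"
    using ode unfolding a_def X[symmetric] .
  have A: "(t*t^(2*n)*phi n t) * (2*(L2 a k (XX n t)*(2*(t*t^(2*n)))) - L1 a k (XX n t)*(2*(t*t^(2*n))))
      + ((t*t^(2*n))*(-(t*t^(2*n))*phi n t) + (2*real n+1)*t^(2*n)*phi n t)*(2*L1 a k (XX n t) - LL a k (XX n t))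
       = ((t^2*(t^(2*n))^2) - (4*real k*(real n+1)+2*real n+1)*t^(2*n)) * (phi n t*LL a k (XX n t))"
    by (rule alg_v[OF _ ode']) simp
  show ?thesis unfolding e
    apply (rule DERIV_cong[OF D])
    using A unfolding pows Ek_def vprof_eq a_def by (simp add: add.commute)
qed

lemma Dw: "(wprof n k has_real_derivative wd n k t) (at t)"
proof -
  have e: "wprof n k = (\<lambda>t. (phi n t * t) * LL (1 / (2 * real n + 2)) k (XX n t))"
    by (rule ext) (simp add: wprof_eq)
  show ?thesis unfolding e wd_def
    by (rule DERIV_cong[OF DERIV_mult'[OF DERIV_mult'[OF Dphi DERIV_ident] DLc]]) (simp add: algebra_simps pows)
qed

lemma Dwd: "(wd n k has_real_derivative ((t^(4*n+2) - (Ek n k + 2) * t^(2*n)) * wprof n k t)) (at t)"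
proof -
  define a where "a = 1 / (2 * real n + 2)"
  have e: "wd n k = (\<lambda>t. phi n t * (LL a k (XX n t) + t^(2*n+2) * (2 * L1 a k (XX n t) - LL a k (XX n t))))"
    by (rule ext) (simp add: wd_def a_def)
  have D: "((\<lambda>t. phi n t * (LL a k (XX n t) + t^(2*n+2) * (2 * L1 a k (XX n t) - LL a k (XX n t)))) has_real_derivative
     phi n t * (L1 a k (XX n t) * (2 * t^(2*n+1)) + (t^(2*n+2) * (2 * (L2 a k (XX n t) * (2 * t^(2*n+1))) - L1 a k (XX n t) * (2 * t^(2*n+1)))
        + ((2 * real n + 2) * t^(2*n+1)) * (2 * L1 a k (XX n t) - LL a k (XX n t))))
     + (- (t^(2*n+1)) * phi n t) * (LL a k (XX n t) + t^(2*n+2) * (2 * L1 a k (XX n t) - LL a k (XX n t)))) (at t)"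
    by (rule DERIV_mult'[OF Dphi DERIV_add[OF DLc DERIV_mult'[OF Dpow2 DERIV_diff[OF DERIV_cmult[OF DL1c] DLc]]]])
  have ode: "XX n t * L2 a k (XX n t) + (a + 1 - XX n t) * L1 a k (XX n t) + real k * LL a k (XX n t) = 0"
    by (rule laguerre_ode)
  have X: "XX n t = t^2 * t^(2*n) / (real n + 1)" unfolding XX_def pows ..
  have ode': "(t^2*t^(2*n)/(real n+1)) * L2 a k (XX n t) + (1 / (2*real n+2) + 1 - t^2*t^(2*n)/(real n+1)) * L1 a k (XX n t) + real k * LL a k (XX n t) = 0"
    using ode unfolding a_def X[symmetric] .
  have A: "phi n t * (L1 a k (XX n t) * (2*(t*t^(2*n))) + ((t^2*t^(2*n)) * (2*(L2 a k (XX n t)*(2*(t*t^(2*n)))) - L1 a k (XX n t)*(2*(t*t^(2*n)))) + ((2*real n+2)*(t*t^(2*n))) * (2*L1 a k (XX n t) - LL a k (XX n t))))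
         + (-(t*t^(2*n))*phi n t) * (LL a k (XX n t) + (t^2*t^(2*n)) * (2*L1 a k (XX n t) - LL a k (XX n t)))
       = ((t^2*(t^(2*n))^2) - (4*real k*(real n+1)+2*real n+1+2)*t^(2*n)) * (phi n t*t*LL a k (XX n t))"
    by (rule alg_w[OF _ ode']) simp
  show ?thesis unfolding e
    apply (rule DERIV_cong[OF D])
    using A unfolding pows Ek_def wprof_eq a_def by simp
qed


lemma Ek_ge1: "Ek n k \<ge> 1" unfolding Ek_def by simp

lemma Ek_powr: "Ek n k \<le> Ek n k powr (3/2 + 1/(4*n+4))"
proof -
  have "0 \<le> 1/(4*real n+4)" by simp
  hence p: "(1::real) \<le> 3/2 + 1/(4*real n+4)" by linarith
  have "Ek n k powr 1 \<le> Ek n k powr (3/2 + 1/(4*n+4))"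
    using Ek_ge1[of n k] p by (intro powr_mono) auto
  thus ?thesis using Ek_ge1[of n k] by simp
qed

theorem proposition5p2:
  fixes n :: nat and c d :: "nat \<Rightarrow> real"
  assumes c_pos: "\<And>k. c k > 0"
    and d_pos: "\<And>k. d k > 0"
    and c_norm: "\<And>k. ((\<lambda>t. (t^n * (c k * vprof n k t))^2) has_integral 1) UNIV"
    and d_norm: "\<And>k. ((\<lambda>t. (t^n * (d k * wprof n k t))^2) has_integral 1) UNIV"
  shows "\<exists>C0>0. \<forall>k. (\<forall>t. \<bar>c k * vprof n k t\<bar> \<le> C0 * Ek n k powr (3/2 + 1/(4*n+4)))
                 \<and> (\<forall>t. \<bar>d k * wprof n k t\<bar> \<le> C0 * Ek n k powr (3/2 + 1/(4*n+4)))"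
proof (intro exI[of _ 7] conjI allI)
  show "(0::real) < 7" by simp
next
  fix k t
  have "odeu (\<lambda>t. c k * vprof n k t) (\<lambda>t. c k * vd n k t) (Ek n k) n"
  proof
    show "\<And>t. ((\<lambda>t. c k * vprof n k t) has_real_derivative c k * vd n k t) (at t)"
      by (rule DERIV_cmult[OF Dv])
    show "\<And>t. ((\<lambda>t. c k * vd n k t) has_real_derivative (t ^ (4 * n + 2) - Ek n k * t ^ (2 * n)) * (c k * vprof n k t)) (at t)"
      by (rule DERIV_cong[OF DERIV_cmult[OF Dvd]]) (simp add: algebra_simps)
    show "0 \<le> Ek n k" using Ek_ge1[of n k] by simp
    show "((\<lambda>t. (t ^ n * (c k * vprof n k t))\<^sup>2) has_integral 1) UNIV" by (rule c_norm)
  qed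
  from odeu.sup_bound[OF this, of t]
  have "\<bar>c k * vprof n k t\<bar> \<le> 4 + Ek n k" by simp
  also have "\<dots> \<le> 7 * Ek n k" using Ek_ge1[of n k] by simp
  also have "\<dots> \<le> 7 * Ek n k powr (3/2 + 1/(4*n+4))" using Ek_powr[of n k] by simp
  finally show "\<bar>c k * vprof n k t\<bar> \<le> 7 * Ek n k powr (3/2 + 1/(4*n+4))" .
next
  fix k t
  have "odeu (\<lambda>t. d k * wprof n k t) (\<lambda>t. d k * wd n k t) (Ek n k + 2) n"
  proof
    show "\<And>t. ((\<lambda>t. d k * wprof n k t) has_real_derivative d k * wd n k t) (at t)"
      by (rule DERIV_cmult[OF Dw])
    show "\<And>t. ((\<lambda>t. d k * wd n k t) has_real_derivative (t ^ (4 * n + 2) - (Ek n k + 2) * t ^ (2 * n)) * (d k * wprof n k t)) (at t)"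
      by (rule DERIV_cong[OF DERIV_cmult[OF Dwd]]) (simp add: algebra_simps)
    show "0 \<le> Ek n k + 2" using Ek_ge1[of n k] by simp
    show "((\<lambda>t. (t ^ n * (d k * wprof n k t))\<^sup>2) has_integral 1) UNIV" by (rule d_norm)
  qed
  from odeu.sup_bound[OF this, of t]
  have "\<bar>d k * wprof n k t\<bar> \<le> 4 + (Ek n k + 2)" by simp
  also have "\<dots> \<le> 7 * Ek n k" using Ek_ge1[of n k] by simp
  also have "\<dots> \<le> 7 * Ek n k powr (3/2 + 1/(4*n+4))" using Ek_powr[of n k] by simp
  finally show "\<bar>d k * wprof n k t\<bar> \<le> 7 * Ek n k powr (3/2 + 1/(4*n+4))" .
qed

end
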